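(* Let $p$ be a prime and $X$ a countable set. For every $A\in\mathcal{B}(\mathbb{Q}_p(X))$ we have $\|A\|=\max\{|A_{ij}|_p: i,j\in X\}$ (in particular the maximum exists).
   Context: $\mathbb{Q}_p(X)$ is the set of maps $\xi:X\to\mathbb{Q}_p$ with $|\xi(i)|_p\le1$ for all but finitely many $i$, a $\mathbb{Z}_p$-module under coordinatewise operations, with the topology $\tau$ in which $A\subseteq\mathbb{Q}_p(X)$ is open iff for every finite $P\subseteq X$ the set $A\cap\big(\prod_{i\in P}\mathbb{Q}_p\times\prod_{j\in X\setminus P}\mathbb{Z}_p\big)$ is open in the product topology. $\mathcal{B}(\mathbb{Q}_p(X))$ is the set of $\tau$-continuous $\mathbb{Z}_p$-linear maps. Norm $\|\xi\|=\max_i|\xi(i)|_p$, operator norm $\|A\|=\sup_{\|\xi\|\le1}\|A\xi\|$. Matrix entries: $A_{ij}=(A\delta_j)(i)$, where $\delta_j(j)=1$ and $\delta_j(y)=0$ for $y\ne j$. *)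

theory Defs
  imports "HOL-Analysis.Analysis" "HOL-Computational_Algebra.Primes"
begin

definition padic_abs_rat :: "nat \<Rightarrow> rat \<Rightarrow> real" where
  "padic_abs_rat p q =
     (if q = 0 then 0
      else real p powr (- (real (multiplicity (int p) (fst (quotient_of q)))
                          - real (multiplicity (int p) (snd (quotient_of q))))))"

text \<open>A model of Q_p: a field of characteristic 0 with an absolute value nv which
  restricts to the p-adic absolute value on Q, in which Q is dense, and which is
  complete; i.e. the completion of Q w.r.t. the p-adic absolute value.\<close>
definition is_Qp :: "nat \<Rightarrow> ('a::field_char_0 \<Rightarrow> real) \<Rightarrow> bool" where
  "is_Qp p nv \<longleftrightarrow>
     (\<forall>x. 0 \<le> nv x) \<and> (\<forall>x. nv x = 0 \<longleftrightarrow> x = 0) \<and>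
     (\<forall>x y. nv (x * y) = nv x * nv y) \<and>
     (\<forall>x y. nv (x + y) \<le> max (nv x) (nv y)) \<and>
     (\<forall>q. nv (of_rat q) = padic_abs_rat p q) \<and>
     (\<forall>x e. e > 0 \<longrightarrow> (\<exists>q. nv (x - of_rat q) < e)) \<and>
     (\<forall>s::nat \<Rightarrow> 'a. (\<forall>e>0. \<exists>N. \<forall>m\<ge>N. \<forall>n\<ge>N. nv (s m - s n) < e) \<longrightarrow>
        (\<exists>L. \<forall>e>0. \<exists>N. \<forall>n\<ge>N. nv (s n - L) < e))"

definition Zp :: "('a \<Rightarrow> real) \<Rightarrow> 'a set" where
  "Zp nv = {x. nv x \<le> 1}"

definition Qp_top :: "('a::ab_group_add \<Rightarrow> real) \<Rightarrow> 'a topology" where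
  "Qp_top nv = topology (\<lambda>U. \<forall>x\<in>U. \<exists>e>0. \<forall>y. nv (y - x) < e \<longrightarrow> y \<in> U)"

text \<open>Q_p(X), with X = UNIV of the index type.\<close>
definition QpX :: "('a \<Rightarrow> real) \<Rightarrow> ('x \<Rightarrow> 'a) set" where
  "QpX nv = {\<xi>. finite {i. \<not> nv (\<xi> i) \<le> 1}}"

definition piece :: "('a \<Rightarrow> real) \<Rightarrow> 'x set \<Rightarrow> ('x \<Rightarrow> 'a) set" where
  "piece nv P = {\<xi>. \<forall>j. j \<notin> P \<longrightarrow> \<xi> j \<in> Zp nv}"

definition piece_top :: "('a::ab_group_add \<Rightarrow> real) \<Rightarrow> 'x set \<Rightarrow> ('x \<Rightarrow> 'a) topology" where
  "piece_top nv P = product_topology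
     (\<lambda>i. if i \<in> P then Qp_top nv else subtopology (Qp_top nv) (Zp nv)) UNIV"

definition tau_open :: "('a::ab_group_add \<Rightarrow> real) \<Rightarrow> ('x \<Rightarrow> 'a) set \<Rightarrow> bool" where
  "tau_open nv A \<longleftrightarrow> A \<subseteq> QpX nv \<and>
     (\<forall>P. finite P \<longrightarrow> openin (piece_top nv P) (A \<inter> piece nv P))"

definition bounded_ops :: "('a::comm_ring_1 \<Rightarrow> real) \<Rightarrow> (('x \<Rightarrow> 'a) \<Rightarrow> ('x \<Rightarrow> 'a)) set" where
  "bounded_ops nv = {A.
     (\<forall>\<xi>\<in>QpX nv. A \<xi> \<in> QpX nv) \<and>
     (\<forall>\<xi>\<in>QpX nv. \<forall>\<eta>\<in>QpX nv. A (\<lambda>i. \<xi> i + \<eta> i) = (\<lambda>i. A \<xi> i + A \<eta> i)) \<and>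
     (\<forall>c\<in>Zp nv. \<forall>\<xi>\<in>QpX nv. A (\<lambda>i. c * \<xi> i) = (\<lambda>i. c * A \<xi> i)) \<and>
     (\<forall>U. tau_open nv U \<longrightarrow> tau_open nv {\<xi>\<in>QpX nv. A \<xi> \<in> U})}"

definition vnorm :: "('a \<Rightarrow> real) \<Rightarrow> ('x \<Rightarrow> 'a) \<Rightarrow> real" where
  "vnorm nv \<xi> = (SUP i. nv (\<xi> i))"

definition opnorm :: "('a \<Rightarrow> real) \<Rightarrow> (('x \<Rightarrow> 'a) \<Rightarrow> ('x \<Rightarrow> 'a)) \<Rightarrow> real" where
  "opnorm nv A = (SUP \<xi>\<in>{\<xi>\<in>QpX nv. vnorm nv \<xi> \<le> 1}. vnorm nv (A \<xi>))"

definition delta :: "'x \<Rightarrow> 'x \<Rightarrow> 'a::zero_neq_one" where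
  "delta j = (\<lambda>y. if y = j then 1 else 0)"

definition mat_entry :: "(('x \<Rightarrow> 'a) \<Rightarrow> ('x \<Rightarrow> 'a)) \<Rightarrow> 'x \<Rightarrow> 'x \<Rightarrow> 'a::zero_neq_one" where
  "mat_entry A i j = A (delta j) i"

end

theory Submission
  imports Defs
begin

lemma istop_Qp: fixes nv :: "'a::ab_group_add \<Rightarrow> real" shows "istopology (\<lambda>U. \<forall>x\<in>U. \<exists>e>0. \<forall>y. nv (y - x) < e \<longrightarrow> y \<in> U)"
  unfolding istopology_def
proof (intro conjI allI impI)
  fix S T :: "'a set"
  assume S: "\<forall>x\<in>S. \<exists>e>0. \<forall>y. nv (y - x) < e \<longrightarrow> y \<in> S"
    and T: "\<forall>x\<in>T. \<exists>e>0. \<forall>y. nv (y - x) < e \<longrightarrow> y \<in> T"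
  show "\<forall>x\<in>S \<inter> T. \<exists>e>0. \<forall>y. nv (y - x) < e \<longrightarrow> y \<in> S \<inter> T"
  proof
    fix x assume "x \<in> S \<inter> T"
    then obtain e1 e2 where e: "e1 > 0" "\<forall>y. nv (y - x) < e1 \<longrightarrow> y \<in> S"
      "e2 > 0" "\<forall>y. nv (y - x) < e2 \<longrightarrow> y \<in> T" using S T by blast
    show "\<exists>e>0. \<forall>y. nv (y - x) < e \<longrightarrow> y \<in> S \<inter> T"
      using e by (intro exI[of _ "min e1 e2"]) auto
  qed
next
  fix K :: "'a set set"
  assume "\<forall>K\<in>K. \<forall>x\<in>K. \<exists>e>0. \<forall>y. nv (y - x) < e \<longrightarrow> y \<in> K"
  then show "\<forall>x\<in>\<Union>K. \<exists>e>0. \<forall>y. nv (y - x) < e \<longrightarrow> y \<in> \<Union>K"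
    by (meson UnionE UnionI)
qed

lemma openin_Qp: fixes nv :: "'a::ab_group_add \<Rightarrow> real" shows "openin (Qp_top nv) U \<longleftrightarrow> (\<forall>x\<in>U. \<exists>e>0. \<forall>y. nv (y - x) < e \<longrightarrow> y \<in> U)"
  unfolding Qp_top_def topology_inverse'[OF istop_Qp] ..

lemma topspace_Qp: fixes nv :: "'a::ab_group_add \<Rightarrow> real" shows "topspace (Qp_top nv) = UNIV"
proof -
  have "openin (Qp_top nv) UNIV" unfolding openin_Qp by (auto intro: exI[of _ 1])
  then show ?thesis using openin_subset by blast
qed

context
  fixes p :: nat and nv :: "'a::field_char_0 \<Rightarrow> real"
  assumes Qp: "is_Qp p nv"
begin

lemmas Qpc = Qp[unfolded is_Qp_def]
lemma nv_nonneg: "0 \<le> nv x" using Qpc[THEN conjunct1] by blast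
lemma nv_zero_iff: "nv x = 0 \<longleftrightarrow> x = 0" using Qpc[THEN conjunct2, THEN conjunct1] by blast
lemma nv_mult: "nv (x * y) = nv x * nv y" using Qpc[THEN conjunct2, THEN conjunct2, THEN conjunct1] by blast
lemma nv_add: "nv (x + y) \<le> max (nv x) (nv y)" using Qpc[THEN conjunct2, THEN conjunct2, THEN conjunct2, THEN conjunct1] by blast
lemma nv_rat: "nv (of_rat q) = padic_abs_rat p q" using Qpc[THEN conjunct2, THEN conjunct2, THEN conjunct2, THEN conjunct2, THEN conjunct1] by blast
lemma nv_dense: "e > 0 \<Longrightarrow> \<exists>q. nv (x - of_rat q) < e" using Qpc[THEN conjunct2, THEN conjunct2, THEN conjunct2, THEN conjunct2, THEN conjunct2, THEN conjunct1] by blast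

lemma nv_0[simp]: "nv 0 = 0" using nv_zero_iff by simp
lemma nv_1[simp]: "nv 1 = 1"
proof -
  have h: "nv 1 = nv 1 * nv 1" using nv_mult[of 1 1] by simp
  have nz: "nv 1 \<noteq> 0" using nv_zero_iff by simp
  have "nv 1 * (nv 1 - 1) = 0" using h by (simp add: algebra_simps)
  then show ?thesis using nz by simp
qed
lemma nv_minus: "nv (- x) = nv x"
proof -
  have "nv (-1) * nv (-1) = 1" using nv_mult[of "-1" "-1"] by simp
  then have "(nv (-1) - 1) * (nv (-1) + 1) = 0" by (simp add: algebra_simps)
  then have "nv (-1) = 1" using nv_nonneg[of "-1"] by auto
  then show ?thesis using nv_mult[of "-1" x] by simp
qed

lemma nv_sum: "finite F \<Longrightarrow> 0 \<le> b \<Longrightarrow> (\<And>j. j \<in> F \<Longrightarrow> nv (f j) \<le> b) \<Longrightarrow> nv (sum f F) \<le> b"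
proof (induction F rule: finite_induct)
  case empty then show ?case by simp
next
  case (insert x F)
  have a: "nv (f x) \<le> b" using insert by simp
  have b: "nv (sum f F) \<le> b" using insert by simp
  show ?case using nv_add[of "f x" "sum f F"] a b insert(1,2) by simp
qed

lemma nv_values: assumes "x \<noteq> 0" shows "\<exists>k::int. nv x = real p powr k"
proof -
  have pos: "nv x > 0" using assms nv_zero_iff nv_nonneg by (metis less_eq_real_def)
  obtain q where q: "nv (x - of_rat q) < nv x" using nv_dense[OF pos] by blast
  have "nv x \<le> max (nv (x - of_rat q)) (nv (of_rat q))" using nv_add[of "x - of_rat q" "of_rat q"] by simp
  then have 1: "nv x \<le> nv (of_rat q)" using q by auto
  have "nv (of_rat q) \<le> max (nv (of_rat q - x)) (nv x)" using nv_add[of "of_rat q - x" x] by simp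
  moreover have "nv (of_rat q - x) = nv (x - of_rat q)" using nv_minus[of "x - of_rat q"] by simp
  ultimately have 2: "nv (of_rat q) \<le> nv x" using q by auto
  have "q \<noteq> 0" using 1 pos by auto
  then have "nv x = real p powr (- (real (multiplicity (int p) (fst (quotient_of q)))
                          - real (multiplicity (int p) (snd (quotient_of q)))))"
    using 1 2 nv_rat[of q] unfolding padic_abs_rat_def by simp
  then show ?thesis
    by (intro exI[of _ "int (multiplicity (int p) (snd (quotient_of q))) - int (multiplicity (int p) (fst (quotient_of q)))"]) simp
qed

lemma Zp_open: "openin (Qp_top nv) (Zp nv)"
  unfolding openin_Qp Zp_def
proof (intro ballI exI[of _ 1] conjI allI impI)
  fix x y assume "x \<in> {x. nv x \<le> 1}" "nv (y - x) < 1"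
  then show "y \<in> {x. nv x \<le> 1}" using nv_add[of "y - x" x] by simp
qed simp

lemma ball_open: "openin (Qp_top nv) {x. nv x < d}"
  unfolding openin_Qp
proof (intro ballI)
  fix x assume x: "x \<in> {x. nv x < d}"
  show "\<exists>e>0. \<forall>y. nv (y - x) < e \<longrightarrow> y \<in> {x. nv x < d}"
  proof (intro exI[of _ d] conjI allI impI)
    show "0 < d" using x nv_nonneg[of x] by simp
    fix y assume "nv (y - x) < d"
    then show "y \<in> {x. nv x < d}" using x nv_add[of "y - x" x] by simp
  qed
qed

lemma piece_sub: "finite P \<Longrightarrow> piece nv P \<subseteq> QpX nv"
  unfolding piece_def QpX_def Zp_def
  by (auto elim: finite_subset[rotated])

lemma topspace_piece: "topspace (piece_top nv P) = piece nv P"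
proof -
  have t: "topspace (if i\<in>P then Qp_top nv else subtopology (Qp_top nv) (Zp nv)) = (if i\<in>P then UNIV else Zp nv)" for i
    by (simp add: topspace_Qp)
  show ?thesis unfolding piece_top_def piece_def topspace_product_topology t
    by (auto simp: PiE_iff split: if_splits)
qed

lemma tau_unit: "tau_open nv {\<eta>\<in>QpX nv. \<forall>i. nv (\<eta> i) \<le> 1}"
  unfolding tau_open_def
proof (intro conjI allI impI)
  fix P :: "'x set" assume P: "finite P"
  have eq: "{\<eta>\<in>QpX nv. \<forall>i. nv (\<eta> i) \<le> 1} \<inter> piece nv P = PiE UNIV (\<lambda>i. Zp nv)"
    unfolding QpX_def piece_def Zp_def by (auto simp: PiE_iff)
  have "openin (piece_top nv P) (PiE UNIV (\<lambda>i. Zp nv))"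
    unfolding piece_top_def openin_PiE_gen
  proof (rule disjI2, intro conjI ballI)
    show "finite {i \<in> UNIV. Zp nv \<noteq> topspace (if i \<in> P then Qp_top nv else subtopology (Qp_top nv) (Zp nv))}"
      by (rule finite_subset[OF _ P]) (auto simp: topspace_Qp)
    fix i :: 'x
    show "openin (if i \<in> P then Qp_top nv else subtopology (Qp_top nv) (Zp nv)) (Zp nv)"
      using Zp_open by (auto simp: openin_subtopology_refl topspace_Qp)
  qed
  then show "openin (piece_top nv P) ({\<eta>\<in>QpX nv. \<forall>i. nv (\<eta> i) \<le> 1} \<inter> piece nv P)"
    using eq by simp
qed auto

lemma tau_coord: "tau_open nv {\<eta>\<in>QpX nv. nv (\<eta> (i0::'x)) < d}"
  unfolding tau_open_def
proof (intro conjI allI impI)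
  fix P :: "'x set" assume P: "finite P"
  define W where "W = (if i0 \<in> P then {x. nv x < d} else Zp nv \<inter> {x. nv x < d})"
  have W: "openin (if i0 \<in> P then Qp_top nv else subtopology (Qp_top nv) (Zp nv)) W"
    unfolding W_def using ball_open by (auto intro: openin_subtopology_Int2)
  have "openin (piece_top nv P) {x \<in> topspace (piece_top nv P). x i0 \<in> W}"
    apply (rule openin_continuous_map_preimage[OF _ W])
    unfolding piece_top_def by (rule continuous_map_product_projection) simp
  moreover have "{x \<in> topspace (piece_top nv P). x i0 \<in> W} = {\<eta>\<in>QpX nv. nv (\<eta> i0) < d} \<inter> piece nv P"
    unfolding topspace_piece W_def using piece_sub[OF P] by (auto simp: piece_def)
  ultimately show "openin (piece_top nv P) ({\<eta>\<in>QpX nv. nv (\<eta> i0) < d} \<inter> piece nv P)" by simp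
qed auto

lemma bo_map: "A \<in> bounded_ops nv \<Longrightarrow> \<xi> \<in> QpX nv \<Longrightarrow> A \<xi> \<in> QpX nv"
  unfolding bounded_ops_def mem_Collect_eq by (drule conjunct1) (erule bspec)
lemma bo_add: "A \<in> bounded_ops nv \<Longrightarrow> \<xi> \<in> QpX nv \<Longrightarrow> \<eta> \<in> QpX nv \<Longrightarrow> A (\<lambda>i. \<xi> i + \<eta> i) = (\<lambda>i. A \<xi> i + A \<eta> i)"
  unfolding bounded_ops_def mem_Collect_eq by (drule conjunct2, drule conjunct1) (drule bspec, assumption, erule bspec)
lemma bo_scal: "A \<in> bounded_ops nv \<Longrightarrow> c \<in> Zp nv \<Longrightarrow> \<xi> \<in> QpX nv \<Longrightarrow> A (\<lambda>i. c * \<xi> i) = (\<lambda>i. c * A \<xi> i)"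
  unfolding bounded_ops_def mem_Collect_eq by (drule conjunct2, drule conjunct2, drule conjunct1) (drule bspec, assumption, erule bspec)
lemma bo_cont: "A \<in> bounded_ops nv \<Longrightarrow> tau_open nv U \<Longrightarrow> tau_open nv {\<xi>\<in>QpX nv. A \<xi> \<in> U}"
  unfolding bounded_ops_def mem_Collect_eq by (drule conjunct2, drule conjunct2, drule conjunct2) (erule allE, erule mp)

lemma A0: assumes "A \<in> bounded_ops nv" shows "A (\<lambda>i. 0) = (\<lambda>i. 0)"
proof -
  have z: "(\<lambda>i. 0) \<in> QpX nv" unfolding QpX_def by simp
  have "(0::'a) \<in> Zp nv" unfolding Zp_def by simp
  from bo_scal[OF assms this z] have "A (\<lambda>i. 0 * (\<lambda>i. 0) i) = (\<lambda>i. 0 * A (\<lambda>i. 0) i)" .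
  then show ?thesis by simp
qed

lemma cont0:
  assumes A: "A \<in> bounded_ops nv" and U: "tau_open nv U" and U0: "(\<lambda>i. 0) \<in> U"
  shows "\<exists>F::'x set. finite F \<and> (\<forall>\<xi>. (\<forall>j. nv (\<xi> j) \<le> 1) \<and> (\<forall>j\<in>F. \<xi> j = 0) \<longrightarrow> A \<xi> \<in> U)"
proof -
  define V where "V = {\<xi>\<in>QpX nv. A \<xi> \<in> U}"
  have "tau_open nv V" unfolding V_def by (rule bo_cont[OF A U])
  then have op: "openin (piece_top nv {}) (V \<inter> piece nv {})" unfolding tau_open_def by blast
  have z: "(\<lambda>i. 0) \<in> V \<inter> piece nv {}"
    using A0[OF A] U0 unfolding V_def QpX_def piece_def Zp_def by simp
  have pt: "piece_top nv {} = product_topology (\<lambda>i. subtopology (Qp_top nv) (Zp nv)) UNIV"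
    unfolding piece_top_def by simp
  obtain W where fin: "finite {i \<in> UNIV. W i \<noteq> topspace (subtopology (Qp_top nv) (Zp nv))}"
    and W0: "(\<lambda>i. 0) \<in> PiE UNIV W" and Wsub: "PiE UNIV W \<subseteq> V \<inter> piece nv {}"
    using op z unfolding pt openin_product_topology_alt by blast
  define F where "F = {i \<in> UNIV. W i \<noteq> topspace (subtopology (Qp_top nv) (Zp nv))}"
  show ?thesis
  proof (intro exI[of _ F] conjI allI impI)
    show "finite F" using fin F_def by simp
    fix \<xi> :: "'x \<Rightarrow> 'a" assume h: "(\<forall>j. nv (\<xi> j) \<le> 1) \<and> (\<forall>j\<in>F. \<xi> j = 0)"
    have "\<xi> \<in> PiE UNIV W"
    proof (unfold PiE_iff, intro conjI ballI)
      fix j :: 'x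
      show "\<xi> j \<in> W j"
      proof (cases "j \<in> F")
        case True then show ?thesis using h W0 by (auto simp: PiE_iff)
      next
        case False then show ?thesis using h unfolding F_def by (auto simp: topspace_Qp Zp_def)
      qed
    qed simp
    then show "A \<xi> \<in> U" using Wsub unfolding V_def by blast
  qed
qed

lemma qpx_bdd: assumes "\<xi> \<in> QpX nv" shows "\<exists>b. \<forall>i. nv (\<xi> i) \<le> b"
proof -
  define S where "S = {i. \<not> nv (\<xi> i) \<le> 1}"
  have fS: "finite S" using assms unfolding S_def QpX_def by simp
  define b where "b = Max (insert 1 ((\<lambda>i. nv (\<xi> i)) ` S))"
  have "nv (\<xi> i) \<le> b" for i
  proof (cases "i \<in> S")
    case True then show ?thesis unfolding b_def using fS by (intro Max_ge) auto
  next
    case False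
    then have "nv (\<xi> i) \<le> 1" unfolding S_def by simp
    also have "1 \<le> b" unfolding b_def using fS by (intro Max_ge) auto
    finally show ?thesis .
  qed
  then show ?thesis by blast
qed

lemma qpx_bdd_above: "\<xi> \<in> QpX nv \<Longrightarrow> bdd_above (range (\<lambda>i. nv (\<xi> i)))"
  using qpx_bdd unfolding bdd_above_def by blast

lemma delta_nv: "nv (delta j i) \<le> 1"
  unfolding delta_def by simp

lemma unit_QpX: "(\<forall>i. nv (\<xi> i) \<le> 1) \<Longrightarrow> \<xi> \<in> QpX nv"
  unfolding QpX_def by simp

lemma decomp:
  assumes A: "A \<in> bounded_ops nv" and F: "finite F" and xi: "\<xi> \<in> QpX nv"
    and b: "\<forall>j\<in>F. nv (\<xi> j) \<le> 1"
  shows "A \<xi> i = (\<Sum>j\<in>F. \<xi> j * A (delta j) i) + A (\<lambda>k. if k \<in> F then 0 else \<xi> k) i"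
  using F b
proof (induction F rule: finite_induct)
  case empty then show ?case by simp
next
  case (insert j F)
  define x1 where "x1 = (\<lambda>k. if k \<in> F then 0 else \<xi> k)"
  define x2 where "x2 = (\<lambda>k. if k \<in> insert j F then 0 else \<xi> k)"
  have cj: "\<xi> j \<in> Zp nv" using insert unfolding Zp_def by simp
  have dq: "delta j \<in> QpX nv" by (rule unit_QpX) (simp add: delta_nv)
  have sq: "(\<lambda>k. \<xi> j * delta j k) \<in> QpX nv"
    by (rule unit_QpX) (use cj in \<open>auto simp: delta_def Zp_def\<close>)
  have x2q: "x2 \<in> QpX nv" using xi unfolding QpX_def x2_def
    by (auto elim: finite_subset[rotated])
  have eq: "x1 = (\<lambda>k. (\<lambda>k. \<xi> j * delta j k) k + x2 k)"
    unfolding x1_def x2_def delta_def using insert(2) by auto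
  have "A x1 = (\<lambda>k. A (\<lambda>k. \<xi> j * delta j k) k + A x2 k)"
  proof -
    have add: "\<And>a b. a \<in> QpX nv \<Longrightarrow> b \<in> QpX nv \<Longrightarrow> A (\<lambda>i. a i + b i) = (\<lambda>i. A a i + A b i)"
      using bo_add[OF A] by blast
    show ?thesis unfolding eq using add[OF sq x2q] by simp
  qed
  moreover have "A (\<lambda>k. \<xi> j * delta j k) = (\<lambda>k. \<xi> j * A (delta j) k)"
    using bo_scal[OF A cj dq] .
  ultimately have "A x1 i = \<xi> j * A (delta j) i + A x2 i" by simp
  moreover have "A \<xi> i = (\<Sum>j\<in>F. \<xi> j * A (delta j) i) + A x1 i"
    using insert unfolding x1_def by simp
  ultimately show ?case using insert(1,2) unfolding x2_def by (simp add: algebra_simps)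
qed

lemma main:
  fixes A :: "('x \<Rightarrow> 'a) \<Rightarrow> ('x \<Rightarrow> 'a)"
  assumes A: "A \<in> bounded_ops nv" and pp: "prime p"
  shows "\<exists>i j. (\<forall>k l. nv (mat_entry A k l) \<le> nv (mat_entry A i j))
               \<and> opnorm nv A = nv (mat_entry A i j)"
proof -
  have p1: "real p > 1" using pp prime_gt_1_nat by simp
  have Aq: "\<forall>\<xi>\<in>QpX nv. A \<xi> \<in> QpX nv" using bo_map[OF A] by blast
  have colq: "A (delta j) \<in> QpX nv" for j
  proof -
    have "delta j \<in> QpX nv" by (rule unit_QpX) (simp add: delta_nv)
    then show ?thesis using Aq by blast
  qed
  have z0: "(\<lambda>i. 0) \<in> {\<eta>\<in>QpX nv. \<forall>i. nv (\<eta> i) \<le> 1}" using unit_QpX[of "\<lambda>i. 0"] by simp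
  from cont0[OF A tau_unit z0] obtain F1 :: "'x set" where F1: "finite F1"
    and F1h: "\<forall>\<xi>. (\<forall>j. nv (\<xi> j) \<le> 1) \<and> (\<forall>j\<in>F1. \<xi> j = 0) \<longrightarrow> A \<xi> \<in> {\<eta>\<in>QpX nv. \<forall>i. nv (\<eta> i) \<le> 1}"
    by blast
  have "\<forall>j. \<exists>b. \<forall>i. nv (A (delta j) i) \<le> b" using qpx_bdd[OF colq] by blast
  then have "\<exists>bf. \<forall>j. \<forall>i. nv (A (delta j) i) \<le> bf j" by (rule choice)
  then obtain bf where bf: "\<And>j i. nv (A (delta j) i) \<le> bf j" by blast
  define B where "B = Max (insert 1 (bf ` F1))"
  have Bb: "nv (A (delta j) i) \<le> B" for i j
  proof (cases "j \<in> F1")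
    case True
    have "bf j \<le> B" unfolding B_def using F1 True by (intro Max_ge) auto
    then show ?thesis using bf[of j i] by simp
  next
    case False
    have "A (delta j) \<in> {\<eta>\<in>QpX nv. \<forall>i. nv (\<eta> i) \<le> 1}"
    proof (rule F1h[rule_format], intro conjI allI ballI)
      show "nv (delta j k) \<le> 1" for k by (rule delta_nv)
      show "delta j k = 0" if "k \<in> F1" for k using that False unfolding delta_def by auto
    qed
    then have "nv (A (delta j) i) \<le> 1" by simp
    also have "1 \<le> B" unfolding B_def using F1 by (intro Max_ge) auto
    finally show ?thesis .
  qed
  have "\<exists>i0 j0. \<forall>k l. nv (A (delta l) k) \<le> nv (A (delta j0) i0)"
  proof (cases "\<forall>i j. A (delta j) i = 0")
    case True then show ?thesis by simp
  next
    case False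
    then obtain i1 j1 where ne: "A (delta j1) i1 \<noteq> 0" by blast
    obtain k1 :: int where k1: "nv (A (delta j1) i1) = real p powr k1" using nv_values[OF ne] by blast
    define K where "K = {k::int. k1 \<le> k \<and> (\<exists>i j. nv (A (delta j) i) = real p powr k)}"
    have "0 < real p powr k1" using p1 by simp
    then have Bpos: "B > 0" using Bb[of j1 i1] k1 by linarith
    have Ksub: "K \<subseteq> {k1..\<lfloor>log p B\<rfloor>}"
    proof
      fix k assume "k \<in> K"
      then obtain i j where k: "k1 \<le> k" "nv (A (delta j) i) = real p powr k" unfolding K_def by blast
      have "real p powr k \<le> B" using Bb[of j i] k by simp
      then have "log p (real p powr k) \<le> log p B"
        using p1 Bpos by (subst log_le_cancel_iff) auto
      then have "real_of_int k \<le> log p B" using p1 by simp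
      then show "k \<in> {k1..\<lfloor>log p B\<rfloor>}" using k by (simp add: le_floor_iff)
    qed
    have fK: "finite K" using finite_subset[OF Ksub] by simp
    have k1K: "k1 \<in> K" unfolding K_def using k1 by blast
    define m where "m = Max K"
    have "m \<in> K" unfolding m_def using fK k1K by (intro Max_in) auto
    then obtain i0 j0 where m: "k1 \<le> m" "nv (A (delta j0) i0) = real p powr m" unfolding K_def by blast
    have "nv (A (delta l) k) \<le> nv (A (delta j0) i0)" for k l
    proof (cases "A (delta l) k = 0")
      case True then show ?thesis using nv_nonneg by simp
    next
      case False
      obtain k' :: int where k': "nv (A (delta l) k) = real p powr k'" using nv_values[OF False] by blast
      have "k' \<le> m"
      proof (cases "k1 \<le> k'")
        case True then have "k' \<in> K" unfolding K_def using k' by blast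
        then show ?thesis unfolding m_def using fK by simp
      next
        case False then show ?thesis using m by simp
      qed
      then have "real p powr real_of_int k' \<le> real p powr real_of_int m"
        using p1 by (intro powr_mono) auto
      then show ?thesis using k' m by simp
    qed
    then show ?thesis by blast
  qed
  then obtain i0 j0 where mx: "\<And>k l. nv (A (delta l) k) \<le> nv (A (delta j0) i0)" by blast
  define M where "M = nv (A (delta j0) i0)"
  have M0: "0 \<le> M" unfolding M_def using nv_nonneg by simp
  have key: "nv (A \<xi> i) \<le> M" if xq: "\<xi> \<in> QpX nv" and x1: "\<forall>j. nv (\<xi> j) \<le> 1" for \<xi> i
  proof (rule ccontr)
    assume "\<not> nv (A \<xi> i) \<le> M"
    then have d: "M < nv (A \<xi> i)" by simp
    define d where "d = nv (A \<xi> i)"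
    have zd: "(\<lambda>k. 0) \<in> {\<eta>\<in>QpX nv. nv (\<eta> i) < d}" using d M0 unit_QpX[of "\<lambda>i. 0"] unfolding d_def by simp
    from cont0[OF A tau_coord zd] obtain F :: "'x set" where F: "finite F"
      and Fh: "\<forall>\<eta>::'x \<Rightarrow> 'a. (\<forall>j. nv (\<eta> j) \<le> 1) \<and> (\<forall>j\<in>F. \<eta> j = 0) \<longrightarrow> A \<eta> \<in> {\<eta>\<in>QpX nv. nv (\<eta> i) < d}"
      by blast
    have "A (\<lambda>k. if k \<in> F then 0 else \<xi> k) \<in> {\<eta>\<in>QpX nv. nv (\<eta> i) < d}"
    proof (rule Fh[rule_format], intro conjI allI ballI)
      show "nv (if k \<in> F then 0 else \<xi> k) \<le> 1" for k using x1 by simp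
      show "(if k \<in> F then 0 else \<xi> k) = 0" if "k \<in> F" for k using that by simp
    qed
    then have r: "nv (A (\<lambda>k. if k \<in> F then 0 else \<xi> k) i) < d" by simp
    have s: "nv (\<Sum>j\<in>F. \<xi> j * A (delta j) i) \<le> M"
    proof (rule nv_sum[OF F M0])
      fix j
      have e: "nv (A (delta j) i) \<le> M" using mx unfolding M_def by blast
      have "nv (\<xi> j) * nv (A (delta j) i) \<le> 1 * M"
        using x1 e nv_nonneg by (intro mult_mono) auto
      then show "nv (\<xi> j * A (delta j) i) \<le> M" by (simp add: nv_mult)
    qed
    have "nv (A \<xi> i) \<le> max (nv (\<Sum>j\<in>F. \<xi> j * A (delta j) i)) (nv (A (\<lambda>k. if k \<in> F then 0 else \<xi> k) i))"
    proof -
      have eqd: "A \<xi> i = (\<Sum>j\<in>F. \<xi> j * A (delta j) i) + A (\<lambda>k. if k \<in> F then 0 else \<xi> k) i"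
        using decomp[OF A F xq] x1 by blast
      show ?thesis by (subst eqd) (rule nv_add)
    qed
    then show False using r s d unfolding d_def by simp
  qed
  define S :: "('x \<Rightarrow> 'a) set" where "S = {\<xi>\<in>QpX nv. vnorm nv \<xi> \<le> 1}"
  have S1: "\<forall>j. nv (\<xi> j) \<le> 1" if "\<xi> \<in> S" for \<xi>
  proof
    fix j
    have "nv (\<xi> j) \<le> vnorm nv \<xi>" unfolding vnorm_def
      using qpx_bdd_above that unfolding S_def by (intro cSUP_upper) auto
    then show "nv (\<xi> j) \<le> 1" using that unfolding S_def by simp
  qed
  have vA: "vnorm nv (A \<xi>) \<le> M" if "\<xi> \<in> S" for \<xi>
    unfolding vnorm_def using key[of \<xi>] S1[OF that] that unfolding S_def
    by (intro cSUP_least) auto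
  have 0: "(\<lambda>i. 0) \<in> S" unfolding S_def vnorm_def using unit_QpX[of "\<lambda>i. 0"] by simp
  have dq: "delta j0 \<in> QpX nv" by (rule unit_QpX) (simp add: delta_nv)
  have "vnorm nv (delta j0 :: 'x \<Rightarrow> 'a) \<le> 1" unfolding vnorm_def by (rule cSUP_least) (auto simp: delta_nv)
  then have dS: "delta j0 \<in> S" using dq unfolding S_def by simp
  have bS: "bdd_above ((\<lambda>\<xi>. vnorm nv (A \<xi>)) ` S)" using vA unfolding bdd_above_def by blast
  have "opnorm nv A \<le> M" unfolding opnorm_def S_def[symmetric] using 0 vA
    by (intro cSUP_least) auto
  moreover have "M \<le> opnorm nv A"
  proof -
    have "M \<le> vnorm nv (A (delta j0))" unfolding M_def vnorm_def
      using qpx_bdd_above[OF colq] by (intro cSUP_upper) auto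
    also have "\<dots> \<le> opnorm nv A" unfolding opnorm_def S_def[symmetric]
      using dS bS by (intro cSUP_upper)
    finally show ?thesis .
  qed
  ultimately have "opnorm nv A = M" by simp
  then show ?thesis unfolding mat_entry_def M_def using mx by blast
qed

end

theorem lemma2p27:
  fixes p :: nat and nv :: "'a::field_char_0 \<Rightarrow> real"
    and A :: "('x::countable \<Rightarrow> 'a) \<Rightarrow> ('x \<Rightarrow> 'a)"
  assumes "prime p" and "is_Qp p nv" and "A \<in> bounded_ops nv"
  shows "\<exists>i j. (\<forall>k l. nv (mat_entry A k l) \<le> nv (mat_entry A i j))
               \<and> opnorm nv A = nv (mat_entry A i j)"
  using main[OF assms(2) assms(3) assms(1)] .

end
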